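(* Let $G$ be a finite, simple, connected graph. Then $res_{wt}(G)=3$ if and only if $G$ is a cycle of odd order or $G$ is a path of order at least three.
   Context: $d(x,y)$ is the shortest-path distance. A set $W\subseteq V(G)$ is a resolving set if for every two distinct vertices $y,z$ there is $x\in W$ with $d(y,x)\ne d(z,x)$. A set $W$ is a weak total resolving set (WTR-set) if $W$ is resolving and, for every $w\in W$ and every $x\in V(G)\setminus W$, there is $w'\in W\setminus\{w\}$ with $d(x,w')\ne d(w,w')$. The weak total resolving number $res_{wt}(G)$ is the minimum positive integer $r$ such that every set of $r$ vertices of $G$ is a WTR-set for $G$. *)

theory Defs
  imports Main
begin

definition simple_graph :: "'a set \<Rightarrow> 'a set set \<Rightarrow> bool" where
  "simple_graph V E \<longleftrightarrow> finite V \<and>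
     (\<forall>e\<in>E. \<exists>u v. e = {u, v} \<and> u \<noteq> v \<and> u \<in> V \<and> v \<in> V)"

definition adj :: "'a set set \<Rightarrow> 'a \<Rightarrow> 'a \<Rightarrow> bool" where
  "adj E u v \<longleftrightarrow> {u, v} \<in> E"

definition walk_len :: "'a set set \<Rightarrow> nat \<Rightarrow> 'a \<Rightarrow> 'a \<Rightarrow> bool" where
  "walk_len E n u v \<longleftrightarrow> (\<exists>xs. length xs = Suc n \<and> xs ! 0 = u \<and> xs ! n = v \<and>
      (\<forall>i<n. adj E (xs ! i) (xs ! Suc i)))"

definition connected_graph :: "'a set \<Rightarrow> 'a set set \<Rightarrow> bool" where
  "connected_graph V E \<longleftrightarrow> V \<noteq> {} \<and> (\<forall>u\<in>V. \<forall>v\<in>V. \<exists>n. walk_len E n u v)"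

text \<open>Shortest-path distance (meaningful in a connected graph).\<close>
definition gdist :: "'a set set \<Rightarrow> 'a \<Rightarrow> 'a \<Rightarrow> nat" where
  "gdist E u v = (LEAST n. walk_len E n u v)"

definition resolving_set :: "'a set \<Rightarrow> 'a set set \<Rightarrow> 'a set \<Rightarrow> bool" where
  "resolving_set V E W \<longleftrightarrow> W \<subseteq> V \<and>
     (\<forall>y\<in>V. \<forall>z\<in>V. y \<noteq> z \<longrightarrow> (\<exists>x\<in>W. gdist E y x \<noteq> gdist E z x))"

definition WTR_set :: "'a set \<Rightarrow> 'a set set \<Rightarrow> 'a set \<Rightarrow> bool" where
  "WTR_set V E W \<longleftrightarrow> resolving_set V E W \<and>
     (\<forall>w\<in>W. \<forall>x\<in>V - W. \<exists>w'\<in>W - {w}. gdist E x w' \<noteq> gdist E w w')"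

definition res_wt :: "'a set \<Rightarrow> 'a set set \<Rightarrow> nat" where
  "res_wt V E = (LEAST r. 0 < r \<and> (\<forall>W. W \<subseteq> V \<and> card W = r \<longrightarrow> WTR_set V E W))"

definition is_cycle_graph :: "'a set \<Rightarrow> 'a set set \<Rightarrow> nat \<Rightarrow> bool" where
  "is_cycle_graph V E n \<longleftrightarrow> n \<ge> 3 \<and>
     (\<exists>f. bij_betw f {0..<n} V \<and> E = {{f i, f ((i + 1) mod n)} | i. i < n})"

definition is_path_graph :: "'a set \<Rightarrow> 'a set set \<Rightarrow> nat \<Rightarrow> bool" where
  "is_path_graph V E n \<longleftrightarrow>
     (\<exists>f. bij_betw f {0..<n} V \<and> E = {{f i, f (i + 1)} | i. i + 1 < n})"

end

theory Submission
  imports Defs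
begin


lemma adj_sym: "adj E u v = adj E v u"
  by (simp add: adj_def insert_commute)

lemma walk0: "walk_len E 0 u v \<longleftrightarrow> u = v"
proof
  assume "walk_len E 0 u v" then show "u = v" unfolding walk_len_def by auto
next
  assume "u = v" then show "walk_len E 0 u v" unfolding walk_len_def
    by (intro exI[of _ "[v]"]) simp
qed

lemma walk_snoc:
  assumes "walk_len E n u v" "adj E v w"
  shows "walk_len E (Suc n) u w"
proof -
  obtain xs where xs: "length xs = Suc n" "xs ! 0 = u" "xs ! n = v"
    "\<forall>i<n. adj E (xs ! i) (xs ! Suc i)" using assms(1) unfolding walk_len_def by blast
  have "length (xs @ [w]) = Suc (Suc n)" using xs by simp
  moreover have "(xs @ [w]) ! 0 = u" using xs by (simp add: nth_append)
  moreover have "(xs @ [w]) ! Suc n = w" using xs by (simp add: nth_append)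
  moreover have "\<forall>i<Suc n. adj E ((xs @ [w]) ! i) ((xs @ [w]) ! Suc i)"
  proof (intro allI impI)
    fix i assume "i < Suc n"
    then consider "i < n" | "i = n" by linarith
    then show "adj E ((xs @ [w]) ! i) ((xs @ [w]) ! Suc i)"
    proof cases
      case 1 then show ?thesis using xs by (simp add: nth_append)
    next
      case 2 then show ?thesis using xs assms(2) by (simp add: nth_append)
    qed
  qed
  ultimately show ?thesis unfolding walk_len_def by blast
qed

lemma walk_rev:
  assumes "walk_len E n u v"
  shows "walk_len E n v u"
proof -
  obtain xs where xs: "length xs = Suc n" "xs ! 0 = u" "xs ! n = v"
    "\<forall>i<n. adj E (xs ! i) (xs ! Suc i)" using assms(1) unfolding walk_len_def by blast
  have "length (rev xs) = Suc n" using xs by simp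
  moreover have "rev xs ! 0 = v" using xs by (simp add: rev_nth)
  moreover have "rev xs ! n = u" using xs by (simp add: rev_nth)
  moreover have "\<forall>i<n. adj E (rev xs ! i) (rev xs ! Suc i)"
  proof (intro allI impI)
    fix i assume i: "i < n"
    have "adj E (xs ! (n - Suc i)) (xs ! Suc (n - Suc i))" using xs i by simp
    moreover have "Suc (n - Suc i) = n - i" using i by simp
    ultimately show "adj E (rev xs ! i) (rev xs ! Suc i)" using xs i
      by (simp add: rev_nth adj_sym)
  qed
  ultimately show ?thesis unfolding walk_len_def by blast
qed

lemma walk_sym: "walk_len E n u v = walk_len E n v u"
  using walk_rev by metis

lemma walk1: "walk_len E 1 u v \<longleftrightarrow> adj E u v"
proof
  assume "walk_len E 1 u v"
  then show "adj E u v" unfolding walk_len_def by force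
next
  assume "adj E u v"
  then show "walk_len E 1 u v" using walk_snoc[of E 0 u u v] walk0[of E u u] by simp
qed

lemma walk_lip:
  assumes h: "\<And>u v. adj E u v \<Longrightarrow> h v \<le> h u + (1::nat)"
    and w: "walk_len E n u v"
  shows "h v \<le> h u + n"
proof -
  obtain xs where xs: "length xs = Suc n" "xs ! 0 = u" "xs ! n = v"
    "\<forall>i<n. adj E (xs ! i) (xs ! Suc i)" using w unfolding walk_len_def by blast
  have "\<forall>i\<le>n. h (xs ! i) \<le> h u + i"
  proof (intro allI impI)
    fix i assume "i \<le> n" then show "h (xs ! i) \<le> h u + i"
    proof (induction i)
      case 0 then show ?case using xs by simp
    next
      case (Suc i)
      then have "h (xs ! Suc i) \<le> h (xs ! i) + 1" using xs h by simp
      then show ?case using Suc by simp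
    qed
  qed
  then show ?thesis using xs by auto
qed

lemma gdist_sym: "gdist E u v = gdist E v u"
  unfolding gdist_def using walk_sym by metis

lemma conn_walk: "connected_graph V E \<Longrightarrow> u \<in> V \<Longrightarrow> v \<in> V \<Longrightarrow> \<exists>n. walk_len E n u v"
  unfolding connected_graph_def by blast

lemma gdist_walk: "connected_graph V E \<Longrightarrow> u \<in> V \<Longrightarrow> v \<in> V \<Longrightarrow> walk_len E (gdist E u v) u v"
  unfolding gdist_def using conn_walk LeastI_ex by metis

lemma gdist_le: "walk_len E n u v \<Longrightarrow> gdist E u v \<le> n"
  unfolding gdist_def by (rule Least_le)

lemma gdist_self: "gdist E u u = 0"
  using gdist_le[of E 0 u u] walk0[of E u u] by simp

lemma gdist_0: "connected_graph V E \<Longrightarrow> u \<in> V \<Longrightarrow> v \<in> V \<Longrightarrow> gdist E u v = 0 \<longleftrightarrow> u = v"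
  using gdist_walk[of V E u v] walk0 gdist_self by metis

lemma gdist_1: "connected_graph V E \<Longrightarrow> u \<in> V \<Longrightarrow> v \<in> V \<Longrightarrow> gdist E u v = 1 \<longleftrightarrow> adj E u v \<and> u \<noteq> v"
proof -
  assume c: "connected_graph V E" "u \<in> V" "v \<in> V"
  show ?thesis
  proof
    assume "gdist E u v = 1" then show "adj E u v \<and> u \<noteq> v"
      using gdist_walk[OF c] walk1 gdist_0[OF c] by force
  next
    assume "adj E u v \<and> u \<noteq> v"
    then show "gdist E u v = 1" using gdist_le[of E 1 u v] walk1 gdist_0[OF c] by force
  qed
qed



definition Pr :: "'a set \<Rightarrow> 'a set set \<Rightarrow> nat \<Rightarrow> bool" where
  "Pr V E r \<longleftrightarrow> (\<forall>W. W \<subseteq> V \<and> card W = r \<longrightarrow> WTR_set V E W)"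

definition pairres :: "'a set \<Rightarrow> 'a set set \<Rightarrow> bool" where
  "pairres V E \<longleftrightarrow> (\<forall>a\<in>V. \<forall>b\<in>V. a \<noteq> b \<longrightarrow> (\<forall>y\<in>V. \<forall>z\<in>V. y \<noteq> z \<longrightarrow>
      gdist E y a \<noteq> gdist E z a \<or> gdist E y b \<noteq> gdist E z b))"

lemma pairres_Pr3:
  assumes "pairres V E"
  shows "Pr V E 3"
  unfolding Pr_def
proof (intro allI impI)
  fix W assume W: "W \<subseteq> V \<and> card W = 3"
  then obtain p q r where pqr: "W = {p,q,r}" "p \<noteq> q" "q \<noteq> r" "p \<noteq> r"
    using card_3_iff by metis
  have res: "resolving_set V E W" unfolding resolving_set_def
  proof (intro conjI ballI impI)
    show "W \<subseteq> V" using W by simp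
  next
    fix y z assume "y \<in> V" "z \<in> V" "y \<noteq> z"
    then have "gdist E y p \<noteq> gdist E z p \<or> gdist E y q \<noteq> gdist E z q"
      using assms pqr W unfolding pairres_def by auto
    then show "\<exists>x\<in>W. gdist E y x \<noteq> gdist E z x" using pqr by auto
  qed
  have "\<forall>w\<in>W. \<forall>x\<in>V - W. \<exists>w'\<in>W - {w}. gdist E x w' \<noteq> gdist E w w'"
  proof (intro ballI)
    fix w x assume w: "w \<in> W" and x: "x \<in> V - W"
    obtain a b where ab: "a \<in> W - {w}" "b \<in> W - {w}" "a \<noteq> b"
      using w pqr by auto
    have "x \<noteq> w" using w x by auto
    then have "gdist E x a \<noteq> gdist E w a \<or> gdist E x b \<noteq> gdist E w b"
      using assms ab x w W unfolding pairres_def by blast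
    then show "\<exists>w'\<in>W - {w}. gdist E x w' \<noteq> gdist E w w'" using ab by blast
  qed
  then show "WTR_set V E W" using res unfolding WTR_set_def by blast
qed

lemma Pr3_pairres:
  assumes c: "connected_graph V E" and P: "Pr V E 3"
  shows "pairres V E"
  unfolding pairres_def
proof (intro ballI impI)
  fix a b y z assume a: "a \<in> V" and b: "b \<in> V" and ab: "a \<noteq> b"
    and y: "y \<in> V" and z: "z \<in> V" and yz: "y \<noteq> z"
  show "gdist E y a \<noteq> gdist E z a \<or> gdist E y b \<noteq> gdist E z b"
  proof (rule ccontr)
    assume "\<not> ?thesis"
    then have e1: "gdist E y a = gdist E z a" and e2: "gdist E y b = gdist E z b" by auto
    have ya: "y \<noteq> a" using e1 gdist_0[OF c z a] gdist_self[of E a] yz by auto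
    have yb: "y \<noteq> b" using e2 gdist_0[OF c z b] gdist_self[of E b] yz by auto
    have za: "z \<noteq> a" using e1 gdist_0[OF c y a] gdist_self[of E a] yz by auto
    have zb: "z \<noteq> b" using e2 gdist_0[OF c y b] gdist_self[of E b] yz by auto
    let ?W = "{y,a,b}"
    have "card ?W = 3" using ya yb ab by simp
    then have "WTR_set V E ?W" using P a b y unfolding Pr_def by auto
    then have "\<exists>w'\<in>?W - {y}. gdist E z w' \<noteq> gdist E y w'"
      unfolding WTR_set_def using z za zb yz by auto
    then show False using e1 e2 ya yb by auto
  qed
qed

lemma Pr_card:
  assumes "connected_graph V E" "finite V"
  shows "Pr V E (card V)"
  unfolding Pr_def
proof (intro allI impI)
  fix W assume W: "W \<subseteq> V \<and> card W = card V"
  then have WV: "W = V" using assms(2) card_subset_eq by blast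
  have "resolving_set V E V" unfolding resolving_set_def
  proof (intro conjI ballI impI)
    fix y z assume "y \<in> V" "z \<in> V" "y \<noteq> z"
    then have "gdist E y y \<noteq> gdist E z y" using gdist_self[of E y] gdist_0[OF assms(1)] by metis
    then show "\<exists>x\<in>V. gdist E y x \<noteq> gdist E z x" using \<open>y \<in> V\<close> by blast
  qed simp
  then show "WTR_set V E W" unfolding WTR_set_def WV by simp
qed

lemma res3_imp:
  assumes s: "simple_graph V E" and c: "connected_graph V E" and r: "res_wt V E = 3"
  shows "Pr V E 3 \<and> card V \<ge> 3"
proof -
  have fin: "finite V" using s unfolding simple_graph_def by simp
  have "V \<noteq> {}" using c unfolding connected_graph_def by simp
  then have cp: "0 < card V" using fin by auto
  have ex: "0 < card V \<and> Pr V E (card V)" using cp Pr_card[OF c fin] by simp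
  have "res_wt V E = (LEAST r. 0 < r \<and> Pr V E r)"
    unfolding res_wt_def Pr_def by simp
  then have l: "(LEAST r. 0 < r \<and> Pr V E r) = 3" using r by simp
  have "0 < (LEAST r. 0 < r \<and> Pr V E r) \<and> Pr V E (LEAST r. 0 < r \<and> Pr V E r)"
    using LeastI[of "\<lambda>r. 0 < r \<and> Pr V E r", OF ex] .
  moreover have "(LEAST r. 0 < r \<and> Pr V E r) \<le> card V"
    using Least_le[of "\<lambda>r. 0 < r \<and> Pr V E r", OF ex] .
  ultimately show ?thesis using l by simp
qed

lemma res3_intro:
  assumes s: "simple_graph V E" and c: "connected_graph V E" and P: "Pr V E 3"
    and a: "a \<in> V" and b: "b \<in> V" and cc: "cv \<in> V"
    and d: "a \<noteq> b" "b \<noteq> cv" "a \<noteq> cv" and e: "adj E a b" "adj E cv b"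
  shows "res_wt V E = 3"
proof -
  have n1: "\<not> Pr V E 1"
  proof
    assume "Pr V E 1"
    then have "WTR_set V E {a}" using a unfolding Pr_def by auto
    then show False using b d unfolding WTR_set_def by auto
  qed
  have n2: "\<not> Pr V E 2"
  proof
    assume "Pr V E 2"
    then have "WTR_set V E {a,b}" using a b d unfolding Pr_def by auto
    then have "\<exists>w'\<in>{a,b} - {a}. gdist E cv w' \<noteq> gdist E a w'"
      using cc d unfolding WTR_set_def by auto
    then have "gdist E cv b \<noteq> gdist E a b" using d by auto
    moreover have "gdist E cv b = 1" using gdist_1[OF c cc b] e d by auto
    moreover have "gdist E a b = 1" using gdist_1[OF c a b] e d by auto
    ultimately show False by simp
  qed
  have "res_wt V E = (LEAST r. 0 < r \<and> Pr V E r)"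
    unfolding res_wt_def Pr_def by simp
  also have "\<dots> = 3"
  proof (rule Least_equality)
    show "0 < (3::nat) \<and> Pr V E 3" using P by simp
  next
    fix y :: nat assume "0 < y \<and> Pr V E y"
    then have "y \<noteq> 1" "y \<noteq> 2" "0 < y" using n1 n2 by auto
    then show "3 \<le> y" by arith
  qed
  finally show ?thesis .
qed



definition pd :: "nat \<Rightarrow> nat \<Rightarrow> nat" where
  "pd i j = (if i \<le> j then j - i else i - j)"

definition cd :: "nat \<Rightarrow> nat \<Rightarrow> nat \<Rightarrow> nat" where
  "cd n i j = (if i \<le> j then min (j - i) (n + i - j) else min (i - j) (n + j - i))"

lemma lip1: "k + 1 < n \<Longrightarrow> i < n \<Longrightarrow> 
   cd n i k \<le> cd n i (k+1) + 1 \<and> cd n i (k+1) \<le> cd n i k + 1"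
  unfolding cd_def min_def by (cases "i \<le> k"; cases "i = k + 1"; simp; arith)
lemma lip2: "i < n \<Longrightarrow> 
   cd n i (n-1) \<le> cd n i 0 + 1 \<and> cd n i 0 \<le> cd n i (n-1) + 1"
  unfolding cd_def min_def by (cases "i = n - 1"; simp; arith)

lemma cd_refl: "cd n y a = cd n z a \<Longrightarrow> y < n \<Longrightarrow> z < n \<Longrightarrow> a < n \<Longrightarrow> y \<noteq> z \<Longrightarrow>
   y + z = 2*a \<or> y + z = 2*a + n \<or> y + z + n = 2*a"
  unfolding cd_def min_def by (cases "y \<le> a"; cases "z \<le> a"; simp split: if_splits; arith)

lemma cd_odd: "odd (n::nat) \<Longrightarrow> a < n \<Longrightarrow> b < n \<Longrightarrow> a \<noteq> b \<Longrightarrow>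
   (y + z = 2*a \<or> y + z = 2*a + n \<or> y + z + n = 2*a) \<Longrightarrow>
   (y + z = 2*b \<or> y + z = 2*b + n \<or> y + z + n = 2*b) \<Longrightarrow> False"
proof -
  assume o: "odd n" and h: "a < n" "b < n" "a \<noteq> b"
    "(y + z = 2*a \<or> y + z = 2*a + n \<or> y + z + n = 2*a)"
    "(y + z = 2*b \<or> y + z = 2*b + n \<or> y + z + n = 2*b)"
  then have "2*a = 2*b \<or> n = 2*a - 2*b \<or> n = 2*b - 2*a" by linarith
  moreover have "2*a - 2*b = 2*(a-b)" "2*b - 2*a = 2*(b-a)" by simp_all
  ultimately show False using o h by auto
qed

lemma pd_refl: "pd y a = pd z a \<Longrightarrow> y \<noteq> z \<Longrightarrow> y + z = 2 * a"
  unfolding pd_def by (cases "y \<le> a"; cases "z \<le> a"; simp; arith)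

lemma gdist_eqI:
  assumes "walk_len E d u v" and "\<And>m. walk_len E m u v \<Longrightarrow> d \<le> m"
  shows "gdist E u v = d"
  unfolding gdist_def using assms by (intro Least_equality) auto

section \<open>Paths\<close>

locale pathg =
  fixes V :: "'a set" and E :: "'a set set" and f :: "nat \<Rightarrow> 'a" and n :: nat
  assumes bij: "bij_betw f {0..<n} V"
    and Edef: "E = {{f i, f (i + 1)} | i. i + 1 < n}"
begin

definition pos where "pos v = inv_into {0..<n} f v"

lemma pos_f: "i < n \<Longrightarrow> pos (f i) = i"
  unfolding pos_def using bij bij_betw_inv_into_left by fastforce

lemma adj_step: "i + 1 < n \<Longrightarrow> adj E (f i) (f (i + 1))"
  unfolding adj_def Edef by blast

lemma adj_cases: "adj E u v \<Longrightarrow> \<exists>k. k + 1 < n \<and> ((u = f k \<and> v = f (k+1)) \<or> (u = f (k+1) \<and> v = f k))"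
  unfolding adj_def Edef by (auto simp: doubleton_eq_iff)

lemma walk_fw: "i \<le> j \<Longrightarrow> j < n \<Longrightarrow> walk_len E (j - i) (f i) (f j)"
proof (induction j)
  case 0 then show ?case using walk0[of E "f i" "f i"] by simp
next
  case (Suc j)
  show ?case
  proof (cases "i = Suc j")
    case True then show ?thesis using walk0[of E "f i" "f i"] by simp
  next
    case False
    then have "walk_len E (j - i) (f i) (f j)" using Suc by simp
    moreover have "adj E (f j) (f (j + 1))" using Suc adj_step by simp
    ultimately have "walk_len E (Suc (j - i)) (f i) (f (Suc j))" using walk_snoc by simp
    moreover have "Suc (j - i) = Suc j - i" using False Suc by simp
    ultimately show ?thesis by simp
  qed
qed

lemma gdist_path: assumes "i < n" "j < n" shows "gdist E (f i) (f j) = pd i j"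
proof (rule gdist_eqI)
  show "walk_len E (pd i j) (f i) (f j)"
  proof (cases "i \<le> j")
    case True then show ?thesis using walk_fw[of i j] assms unfolding pd_def by auto
  next
    case False then show ?thesis using walk_fw[of j i] walk_sym[of E "i - j" "f j" "f i"] assms
      unfolding pd_def by auto
  qed
next
  fix m assume w: "walk_len E m (f i) (f j)"
  let ?h = "\<lambda>v. pd i (pos v)"
  have "?h (f j) \<le> ?h (f i) + m"
  proof (rule walk_lip[OF _ w])
    fix u v assume "adj E u v"
    then obtain k where "k + 1 < n" "(u = f k \<and> v = f (k+1)) \<or> (u = f (k+1) \<and> v = f k)"
      using adj_cases by blast
    then show "?h v \<le> ?h u + 1" using pos_f unfolding pd_def by auto
  qed
  then show "pd i j \<le> m" using pos_f assms unfolding pd_def by auto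
qed

lemma surj_f: "v \<in> V \<Longrightarrow> \<exists>i<n. v = f i"
  using bij unfolding bij_betw_def by auto

lemma pairres_path: "pairres V E"
  unfolding pairres_def
proof (intro ballI impI)
  fix a b y z assume "a \<in> V" "b \<in> V" "a \<noteq> b" "y \<in> V" "z \<in> V" "y \<noteq> z"
  then obtain ai bi yi zi where "ai < n" "bi < n" "yi < n" "zi < n"
    "a = f ai" "b = f bi" "y = f yi" "z = f zi" using surj_f by metis
  moreover have "ai \<noteq> bi" "yi \<noteq> zi" using calculation \<open>a \<noteq> b\<close> \<open>y \<noteq> z\<close> by auto
  moreover have "pd yi ai \<noteq> pd zi ai \<or> pd yi bi \<noteq> pd zi bi"
  proof (rule ccontr)
    assume "\<not> ?thesis"
    then have "yi + zi = 2 * ai" "yi + zi = 2 * bi" using pd_refl \<open>yi \<noteq> zi\<close> by auto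
    then show False using \<open>ai \<noteq> bi\<close> by simp
  qed
  ultimately show "gdist E y a \<noteq> gdist E z a \<or> gdist E y b \<noteq> gdist E z b"
    using gdist_path by metis
qed

end

section \<open>Cycles\<close>

locale cycg =
  fixes V :: "'a set" and E :: "'a set set" and f :: "nat \<Rightarrow> 'a" and n :: nat
  assumes bij: "bij_betw f {0..<n} V"
    and Edef: "E = {{f i, f ((i + 1) mod n)} | i. i < n}"
    and n3: "n \<ge> 3"
begin

definition pos where "pos v = inv_into {0..<n} f v"

lemma pos_f: "i < n \<Longrightarrow> pos (f i) = i"
  unfolding pos_def using bij bij_betw_inv_into_left by fastforce

lemma adj_step: "i < n \<Longrightarrow> adj E (f i) (f ((i + 1) mod n))"
  unfolding adj_def Edef by blast

lemma nxt: "k < n \<Longrightarrow> (k + 1) mod n = (if k + 1 < n then k + 1 else 0)"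
proof (cases "k + 1 < n")
  case False
  assume "k < n" then have "k + 1 = n" using False by simp
  then show ?thesis by simp
qed simp

lemma adj_cases: "adj E u v \<Longrightarrow> \<exists>k. k < n \<and> ((u = f k \<and> v = f ((k+1) mod n)) \<or> (u = f ((k+1) mod n) \<and> v = f k))"
  unfolding adj_def Edef by (auto simp: doubleton_eq_iff)

lemma walk_fw: "i < n \<Longrightarrow> walk_len E k (f i) (f ((i + k) mod n))"
proof (induction k)
  case 0 then show ?case using walk0[of E "f i" "f i"] by simp
next
  case (Suc k)
  have "adj E (f ((i + k) mod n)) (f (((i + k) mod n + 1) mod n))"
    using adj_step n3 by simp
  moreover have "((i + k) mod n + 1) mod n = (i + Suc k) mod n"
    by (simp add: mod_Suc_eq)
  ultimately show ?case using Suc walk_snoc by metis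
qed

lemma gdist_cyc: assumes "i < n" "j < n" shows "gdist E (f i) (f j) = cd n i j"
proof (rule gdist_eqI)
  have w1: "walk_len E (j - i) (f i) (f j)" if "i \<le> j" "j < n" for i j
    using walk_fw[of i "j - i"] that by simp
  have w2: "walk_len E (n + i - j) (f i) (f j)" if "i \<le> j" "j < n" for i j
  proof -
    have "walk_len E (n + i - j) (f j) (f ((j + (n + i - j)) mod n))"
      using walk_fw[of j "n + i - j"] that by simp
    moreover have "(j + (n + i - j)) mod n = i" using that assms by simp
    ultimately show ?thesis using walk_sym by metis
  qed
  show "walk_len E (cd n i j) (f i) (f j)"
  proof (cases "i \<le> j")
    case True then show ?thesis using w1[of i j] w2[of i j] assms unfolding cd_def by (simp add: min_def)
  next
    case False
    then have "walk_len E (i - j) (f i) (f j)" "walk_len E (n + j - i) (f i) (f j)"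
      using w1[of j i] w2[of j i] assms False walk_rev by auto
    then show ?thesis using False unfolding cd_def by (simp add: min_def)
  qed
next
  fix m assume w: "walk_len E m (f i) (f j)"
  let ?h = "\<lambda>v. cd n i (pos v)"
  have "?h (f j) \<le> ?h (f i) + m"
  proof (rule walk_lip[OF _ w])
    fix u v assume "adj E u v"
    then obtain k where k: "k < n" "(u = f k \<and> v = f ((k+1) mod n)) \<or> (u = f ((k+1) mod n) \<and> v = f k)"
      using adj_cases by blast
    have "(k + 1) mod n < n" using n3 by simp
    then have p: "pos (f ((k+1) mod n)) = (if k + 1 < n then k + 1 else 0)" using pos_f nxt k by simp
    have L: "cd n i k \<le> cd n i (pos (f ((k+1) mod n))) + 1 \<and> cd n i (pos (f ((k+1) mod n))) \<le> cd n i k + 1"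
    proof (cases "k + 1 < n")
      case True then show ?thesis using p lip1[of k n i] assms by simp
    next
      case False then have "k = n - 1" using k by simp
      then show ?thesis using p lip2[of i n] assms False by simp
    qed
    show "?h v \<le> ?h u + 1" using k L pos_f by auto
  qed
  then show "cd n i j \<le> m" using pos_f assms unfolding cd_def by auto
qed

lemma surj_f: "v \<in> V \<Longrightarrow> \<exists>i<n. v = f i"
  using bij unfolding bij_betw_def by auto

lemma pairres_cyc: assumes "odd n" shows "pairres V E"
  unfolding pairres_def
proof (intro ballI impI)
  fix a b y z assume "a \<in> V" "b \<in> V" "a \<noteq> b" "y \<in> V" "z \<in> V" "y \<noteq> z"
  then obtain ai bi yi zi where i: "ai < n" "bi < n" "yi < n" "zi < n"
    "a = f ai" "b = f bi" "y = f yi" "z = f zi" using surj_f by metis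
  moreover have "ai \<noteq> bi" "yi \<noteq> zi" using calculation \<open>a \<noteq> b\<close> \<open>y \<noteq> z\<close> by auto
  moreover have "cd n yi ai \<noteq> cd n zi ai \<or> cd n yi bi \<noteq> cd n zi bi"
  proof (rule ccontr)
    assume "\<not> ?thesis"
    then have e1: "cd n yi ai = cd n zi ai" and e2: "cd n yi bi = cd n zi bi" by auto
    have r1: "yi + zi = 2*ai \<or> yi + zi = 2*ai + n \<or> yi + zi + n = 2*ai"
      using cd_refl[OF e1] i calculation by blast
    have r2: "yi + zi = 2*bi \<or> yi + zi = 2*bi + n \<or> yi + zi + n = 2*bi"
      using cd_refl[OF e2] i calculation by blast
    show False using cd_odd[OF assms _ _ _ r1 r2] i calculation by blast
  qed
  ultimately show "gdist E y a \<noteq> gdist E z a \<or> gdist E y b \<noteq> gdist E z b"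
    using gdist_cyc by metis
qed

lemma not_pairres_even: assumes "even n" shows "\<not> pairres V E"
proof
  assume p: "pairres V E"
  obtain k where k: "n = 2 * k" using assms by auto
  have k2: "k \<ge> 2" using k n3 by simp
  have in_: "f 0 \<in> V" "f k \<in> V" "f 1 \<in> V" "f (n - 1) \<in> V"
    using bij k2 k unfolding bij_betw_def by auto
  have inj: "inj_on f {0..<n}" using bij bij_betw_def by blast
  have ne1: "f 0 \<noteq> f k"
  proof
    assume "f 0 = f k" then have "0 = k" using inj_onD[OF inj, of 0 k] k k2 by simp
    then show False using k2 by simp
  qed
  have ne2: "f 1 \<noteq> f (n - 1)"
  proof
    assume "f 1 = f (n - 1)" then have "1 = n - 1" using inj_onD[OF inj, of 1 "n - 1"] k k2 by simp
    then show False using k k2 by simp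
  qed
  note ne = ne1 ne2
  have "gdist E (f 1) (f 0) \<noteq> gdist E (f (n-1)) (f 0) \<or> gdist E (f 1) (f k) \<noteq> gdist E (f (n-1)) (f k)"
    using p in_ ne unfolding pairres_def by blast
  moreover have "cd n 1 0 = 1" using k k2 unfolding cd_def by simp
  moreover have "cd n (n-1) 0 = 1" using k k2 unfolding cd_def by simp
  moreover have "cd n 1 k = k - 1" using k k2 unfolding cd_def by simp
  moreover have "cd n (n-1) k = k - 1" using k k2 unfolding cd_def by simp
  moreover have "0 < n" "1 < n" "k < n" "n - 1 < n" using k k2 by auto
  ultimately show False using gdist_cyc by metis
qed

end



lemma adj_V: "simple_graph V E \<Longrightarrow> adj E u v \<Longrightarrow> u \<in> V \<and> v \<in> V \<and> u \<noteq> v"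
  unfolding simple_graph_def adj_def by (fastforce simp: doubleton_eq_iff)

lemma gdist_2:
  assumes s: "simple_graph V E" and c: "connected_graph V E"
    and a1: "adj E v u1" and a2: "adj E v u2" and ne: "u1 \<noteq> u2"
  shows "gdist E u1 u2 = (if adj E u1 u2 then 1 else 2)"
proof -
  have V: "u1 \<in> V" "u2 \<in> V" "v \<in> V" using adj_V[OF s a1] adj_V[OF s a2] by auto
  have "walk_len E 1 u1 v" using a1 walk1 adj_sym by metis
  then have "walk_len E 2 u1 u2" using walk_snoc[of E 1 u1 v u2] a2 by (simp add: numeral_2_eq_2)
  then have le: "gdist E u1 u2 \<le> 2" by (rule gdist_le)
  have n0: "gdist E u1 u2 \<noteq> 0" using gdist_0[OF c V(1,2)] ne by simp
  have "gdist E u1 u2 = 1 \<longleftrightarrow> adj E u1 u2" using gdist_1[OF c V(1,2)] ne by simp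
  then show ?thesis using le n0 by auto
qed

lemma deg2:
  assumes s: "simple_graph V E" and c: "connected_graph V E" and p: "pairres V E"
    and a1: "adj E v u1" and a2: "adj E v u2" and a3: "adj E v u3"
  shows "u1 = u2 \<or> u1 = u3 \<or> u2 = u3"
proof (rule ccontr)
  assume "\<not> ?thesis"
  then have d: "u1 \<noteq> u2" "u1 \<noteq> u3" "u2 \<noteq> u3" by auto
  have V: "u1 \<in> V" "u2 \<in> V" "u3 \<in> V" "v \<in> V" "v \<noteq> u1" "v \<noteq> u2" "v \<noteq> u3"
    using adj_V[OF s a1] adj_V[OF s a2] adj_V[OF s a3] by auto
  have g1: "gdist E u1 v = 1" "gdist E u2 v = 1" "gdist E u3 v = 1"
    using gdist_1[OF c] V a1 a2 a3 adj_sym by metis+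
  have "gdist E u2 u1 \<noteq> gdist E u3 u1"
    using p V d g1 unfolding pairres_def by metis
  then have A: "adj E u2 u1 \<noteq> adj E u3 u1"
    using gdist_2[OF s c a2 a1] gdist_2[OF s c a3 a1] d by (auto split: if_splits)
  have "gdist E u1 u2 \<noteq> gdist E u3 u2"
    using p V d g1 unfolding pairres_def by metis
  then have B: "adj E u1 u2 \<noteq> adj E u3 u2"
    using gdist_2[OF s c a1 a2] gdist_2[OF s c a3 a2] d by (auto split: if_splits)
  have "gdist E u1 u3 \<noteq> gdist E u2 u3"
    using p V d g1 unfolding pairres_def by metis
  then have C: "adj E u1 u3 \<noteq> adj E u2 u3"
    using gdist_2[OF s c a1 a3] gdist_2[OF s c a2 a3] d by (auto split: if_splits)
  show False using A B C adj_sym by metis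
qed

definition spath :: "'a set \<Rightarrow> 'a set set \<Rightarrow> 'a list \<Rightarrow> bool" where
  "spath V E xs \<longleftrightarrow> xs \<noteq> [] \<and> distinct xs \<and> set xs \<subseteq> V \<and>
     (\<forall>i. Suc i < length xs \<longrightarrow> adj E (xs ! i) (xs ! Suc i))"

lemma spath_snoc:
  assumes "spath V E xs" "u \<in> V" "u \<notin> set xs" "adj E (xs ! (length xs - 1)) u"
  shows "spath V E (xs @ [u])"
  unfolding spath_def
proof (intro conjI allI impI)
  fix i assume i: "Suc i < length (xs @ [u])"
  show "adj E ((xs @ [u]) ! i) ((xs @ [u]) ! Suc i)"
  proof (cases "Suc i < length xs")
    case True then show ?thesis using assms(1) unfolding spath_def by (simp add: nth_append)
  next
    case False then have "i = length xs - 1" "Suc i = length xs" using i by auto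
    then show ?thesis using assms(4) by (simp add: nth_append)
  qed
qed (use assms in \<open>auto simp: spath_def\<close>)

lemma spath_cons:
  assumes "spath V E xs" "u \<in> V" "u \<notin> set xs" "adj E u (xs ! 0)"
  shows "spath V E (u # xs)"
  unfolding spath_def
proof (intro conjI allI impI)
  fix i assume i: "Suc i < length (u # xs)"
  show "adj E ((u # xs) ! i) ((u # xs) ! Suc i)"
  proof (cases i)
    case 0 then show ?thesis using assms(4) by simp
  next
    case (Suc j) then show ?thesis using assms(1) i unfolding spath_def by simp
  qed
qed (use assms in \<open>auto simp: spath_def\<close>)

locale dg =
  fixes V :: "'a set" and E :: "'a set set"
  assumes s: "simple_graph V E" and c: "connected_graph V E" and p: "pairres V E"
begin

lemma fin: "finite V" using s unfolding simple_graph_def by simp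

lemma spath_len: "spath V E xs \<Longrightarrow> length xs \<le> card V"
  unfolding spath_def using distinct_card card_mono fin by metis

lemma longest: "\<exists>xs. spath V E xs \<and> (\<forall>ys. spath V E ys \<longrightarrow> length ys \<le> length xs)"
proof -
  obtain v where v: "v \<in> V" using c unfolding connected_graph_def by auto
  have "spath V E [v]" using v unfolding spath_def by simp
  then have "\<exists>l. \<exists>xs. spath V E xs \<and> length xs = l" by blast
  then obtain l0 where "\<exists>xs. spath V E xs \<and> length xs = l0" by blast
  then obtain L where L: "\<exists>xs. spath V E xs \<and> length xs = L"
    "\<forall>y. (\<exists>xs. spath V E xs \<and> length xs = y) \<longrightarrow> y \<le> L"
    using Nat.ex_has_greatest_nat[of "\<lambda>l. \<exists>xs. spath V E xs \<and> length xs = l" l0 "card V"] spath_len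
    by blast
  then show ?thesis by blast
qed

end



locale lp = dg +
  fixes xs :: "'a list"
  assumes sp: "spath V E xs" and mx: "\<And>ys. spath V E ys \<Longrightarrow> length ys \<le> length xs"
begin

abbreviation "L \<equiv> length xs"

lemma Lpos: "0 < L" using sp unfolding spath_def by simp

lemma nthV: "k < L \<Longrightarrow> xs ! k \<in> V" using sp unfolding spath_def by auto

lemma cadj: "Suc k < L \<Longrightarrow> adj E (xs ! k) (xs ! Suc k)" using sp unfolding spath_def by auto

lemma dist: "distinct xs" using sp unfolding spath_def by auto

lemma neq: "i < L \<Longrightarrow> j < L \<Longrightarrow> i \<noteq> j \<Longrightarrow> xs ! i \<noteq> xs ! j"
  using dist nth_eq_iff_index_eq by blast

lemma closure: assumes k: "k < L" and a: "adj E (xs ! k) u" shows "u \<in> set xs"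
proof (rule ccontr)
  assume nu: "u \<notin> set xs"
  have uV: "u \<in> V" using adj_V[OF s a] by simp
  consider "k = L - 1" | "k = 0" | "0 < k" "k < L - 1" using k by linarith
  then show False
  proof cases
    case 1
    then have "spath V E (xs @ [u])" using spath_snoc[OF sp uV nu] a by simp
    then show False using mx[of "xs @ [u]"] by simp
  next
    case 2
    then have "spath V E (u # xs)" using spath_cons[OF sp uV nu] a adj_sym by metis
    then show False using mx[of "u # xs"] by simp
  next
    case 3
    have a1: "adj E (xs ! k) (xs ! (k - 1))"
    proof -
      have "Suc (k - 1) = k" "Suc (k - 1) < L" using 3 by auto
      then have "adj E (xs ! (k - 1)) (xs ! k)" using cadj[of "k - 1"] by metis
      then show ?thesis using adj_sym by metis
    qed
    have a2: "adj E (xs ! k) (xs ! Suc k)" using cadj[of k] 3 by simp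
    have "xs ! (k - 1) \<noteq> xs ! Suc k" using neq 3 by simp
    then have "u = xs ! (k - 1) \<or> u = xs ! Suc k" using deg2[OF s c p a1 a2 a] by blast
    then show False using nu 3 by auto
  qed
qed

lemma allV: "set xs = V"
proof
  show "set xs \<subseteq> V" using sp unfolding spath_def by simp
next
  show "V \<subseteq> set xs"
  proof
    fix v assume v: "v \<in> V"
    have x0: "xs ! 0 \<in> V" using nthV Lpos by simp
    obtain m where "walk_len E m (xs ! 0) v" using conn_walk[OF c x0 v] by blast
    then obtain ys where ys: "length ys = Suc m" "ys ! 0 = xs ! 0" "ys ! m = v"
      "\<forall>i<m. adj E (ys ! i) (ys ! Suc i)" unfolding walk_len_def by blast
    have "\<forall>i\<le>m. ys ! i \<in> set xs"
    proof (intro allI impI)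
      fix i assume "i \<le> m" then show "ys ! i \<in> set xs"
      proof (induction i)
        case 0 then show ?case using ys Lpos by simp
      next
        case (Suc i)
        then obtain k where k: "k < L" "ys ! i = xs ! k" using in_set_conv_nth[of "ys ! i" xs] by auto
        have "i < m" using Suc.prems by simp
        then have "adj E (ys ! i) (ys ! Suc i)" using ys(4) by blast
        then have "adj E (xs ! k) (ys ! Suc i)" using k by simp
        then show ?case using closure k by simp
      qed
    qed
    then show "v \<in> set xs" using ys by auto
  qed
qed

lemma edge_shape:
  assumes ij: "i < j" "j < L" and a: "adj E (xs ! i) (xs ! j)"
  shows "j = Suc i \<or> (i = 0 \<and> j = L - 1)"
proof (rule ccontr)
  assume h: "\<not> ?thesis"
  then have j2: "j \<noteq> Suc i" by auto
  consider "0 < i" | "i = 0" "j < L - 1" using h ij by (cases "i = 0") auto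
  then show False
  proof cases
    case 1
    have a1: "adj E (xs ! i) (xs ! (i - 1))"
    proof -
      have "Suc (i - 1) = i" "Suc (i - 1) < L" using 1 ij by auto
      then have "adj E (xs ! (i - 1)) (xs ! i)" using cadj[of "i - 1"] by metis
      then show ?thesis using adj_sym by metis
    qed
    have a2: "adj E (xs ! i) (xs ! Suc i)" using cadj[of i] ij j2 by simp
    have "xs ! (i - 1) \<noteq> xs ! Suc i" "xs ! (i - 1) \<noteq> xs ! j" "xs ! Suc i \<noteq> xs ! j"
      using neq 1 ij j2 by auto
    then show False using deg2[OF s c p a1 a2 a] by blast
  next
    case 2
    have a1: "adj E (xs ! j) (xs ! (j - 1))"
    proof -
      have "Suc (j - 1) = j" "Suc (j - 1) < L" using 2 ij by auto
      then have "adj E (xs ! (j - 1)) (xs ! j)" using cadj[of "j - 1"] by metis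
      then show ?thesis using adj_sym by metis
    qed
    have a2: "adj E (xs ! j) (xs ! Suc j)" using cadj[of j] 2 by simp
    have a3: "adj E (xs ! j) (xs ! i)" using a adj_sym by metis
    have "xs ! (j - 1) \<noteq> xs ! Suc j" using neq[of "j - 1" "Suc j"] 2 ij Lpos by fastforce
    moreover have "xs ! (j - 1) \<noteq> xs ! i" using neq[of "j - 1" i] 2 ij j2 Lpos by fastforce
    moreover have "xs ! Suc j \<noteq> xs ! i" using neq[of "Suc j" i] 2 ij Lpos by fastforce
    ultimately show False using deg2[OF s c p a1 a2 a3] by blast
  qed
qed

lemma edge_in:
  assumes e: "e \<in> E"
  shows "\<exists>i j. i < j \<and> j < L \<and> e = {xs ! i, xs ! j} \<and> (j = Suc i \<or> (i = 0 \<and> j = L - 1))"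
proof -
  obtain a b where ab: "e = {a, b}" "a \<noteq> b" "a \<in> V" "b \<in> V"
    using s e unfolding simple_graph_def by blast
  obtain ia ib where i: "ia < L" "ib < L" "a = xs ! ia" "b = xs ! ib"
    using ab allV in_set_conv_nth by metis
  have aab: "adj E a b" using e ab unfolding adj_def by simp
  have "ia \<noteq> ib" using i ab by auto
  then consider "ia < ib" | "ib < ia" by linarith
  then show ?thesis
  proof cases
    case 1 then show ?thesis using edge_shape[of ia ib] i ab aab by blast
  next
    case 2
    have "adj E (xs ! ib) (xs ! ia)" using aab i adj_sym by metis
    then show ?thesis using edge_shape[of ib ia] i ab 2 by (metis insert_commute)
  qed
qed

lemma bij: "bij_betw ((!) xs) {0..<L} V"
  using bij_betw_nth[OF dist _ allV[symmetric]] by (simp add: atLeast0LessThan)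

lemma cardL: "card V = L" using allV dist distinct_card by metis

lemma struct_thm:
  assumes "card V \<ge> 3"
  shows "(odd L \<and> is_cycle_graph V E L) \<or> (L \<ge> 3 \<and> is_path_graph V E L)"
proof -
  have L3: "L \<ge> 3" using assms cardL by simp
  let ?f = "(!) xs"
  show ?thesis
  proof (cases "adj E (xs ! 0) (xs ! (L - 1))")
    case True
    have Eeq: "E = {{?f i, ?f ((i + 1) mod L)} | i. i < L}"
    proof
      show "E \<subseteq> {{?f i, ?f ((i + 1) mod L)} | i. i < L}"
      proof
        fix e assume "e \<in> E"
        then obtain i j where ij: "i < j" "j < L" "e = {xs ! i, xs ! j}" "j = Suc i \<or> (i = 0 \<and> j = L - 1)"
          using edge_in by blast
        show "e \<in> {{?f i, ?f ((i + 1) mod L)} | i. i < L}"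
        proof (cases "j = Suc i")
          case True then show ?thesis using ij by (intro CollectI exI[of _ i]) auto
        next
          case False
          then have "i = 0" "j = L - 1" using ij by auto
          moreover have "((L - 1) + 1) mod L = 0"
          proof -
            have "(L - 1) + 1 = L" using L3 by simp
            then show ?thesis by simp
          qed
          ultimately show ?thesis using ij L3
            by (intro CollectI exI[of _ "L - 1"]) (auto simp: insert_commute)
        qed
      qed
    next
      show "{{?f i, ?f ((i + 1) mod L)} | i. i < L} \<subseteq> E"
      proof
        fix e assume "e \<in> {{?f i, ?f ((i + 1) mod L)} | i. i < L}"
        then obtain i where i: "i < L" "e = {?f i, ?f ((i + 1) mod L)}" by blast
        show "e \<in> E"
        proof (cases "i + 1 < L")
          case True then show ?thesis using i cadj[of i] unfolding adj_def by simp
        next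
          case False then have "i = L - 1" "i + 1 = L" using i by auto
          then have "i = L - 1" "(i + 1) mod L = 0" by simp_all
          then show ?thesis using i True adj_sym[of E "xs ! 0" "xs ! (L - 1)"]
            unfolding adj_def by simp
        qed
      qed
    qed
    interpret cycg V E ?f L using bij Eeq L3 by unfold_locales auto
    have "odd L" using not_pairres_even p by blast
    then show ?thesis using bij Eeq L3 unfolding is_cycle_graph_def by blast
  next
    case False
    have Eeq: "E = {{?f i, ?f (i + 1)} | i. i + 1 < L}"
    proof
      show "E \<subseteq> {{?f i, ?f (i + 1)} | i. i + 1 < L}"
      proof
        fix e assume "e \<in> E"
        then obtain i j where ij: "i < j" "j < L" "e = {xs ! i, xs ! j}" "j = Suc i \<or> (i = 0 \<and> j = L - 1)"
          using edge_in by blast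
        have "j = Suc i"
        proof (rule ccontr)
          assume "j \<noteq> Suc i"
          then have "i = 0" "j = L - 1" using ij by auto
          moreover have "e \<in> E" by fact
          ultimately show False using False ij unfolding adj_def by simp
        qed
        then show "e \<in> {{?f i, ?f (i + 1)} | i. i + 1 < L}" using ij by auto
      qed
    next
      show "{{?f i, ?f (i + 1)} | i. i + 1 < L} \<subseteq> E"
        using cadj unfolding adj_def by auto
    qed
    then show ?thesis using bij L3 unfolding is_path_graph_def by blast
  qed
qed

end



theorem theorem6:
  fixes V :: "'a set" and E :: "'a set set"
  assumes "simple_graph V E" and "connected_graph V E"
  shows "res_wt V E = 3 \<longleftrightarrow>
           ((\<exists>n. odd n \<and> is_cycle_graph V E n) \<or> (\<exists>n. n \<ge> 3 \<and> is_path_graph V E n))"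
proof
  assume r: "res_wt V E = 3"
  have P: "Pr V E 3" and cV: "card V \<ge> 3" using res3_imp[OF assms r] by auto
  have pr: "pairres V E" using Pr3_pairres[OF assms(2) P] .
  interpret dg V E using assms pr by unfold_locales
  obtain xs where xs: "spath V E xs" "\<forall>ys. spath V E ys \<longrightarrow> length ys \<le> length xs"
    using longest by blast
  interpret lp V E xs using xs by unfold_locales auto
  show "(\<exists>n. odd n \<and> is_cycle_graph V E n) \<or> (\<exists>n. n \<ge> 3 \<and> is_path_graph V E n)"
    using struct_thm[OF cV] by blast
next
  assume "(\<exists>n. odd n \<and> is_cycle_graph V E n) \<or> (\<exists>n. n \<ge> 3 \<and> is_path_graph V E n)"
  then show "res_wt V E = 3"
  proof
    assume "\<exists>n. odd n \<and> is_cycle_graph V E n"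
    then obtain n :: nat and f where o: "odd n" and n3: "n \<ge> 3" and b: "bij_betw f {0..<n} V"
      and Ed: "E = {{f i, f ((i + 1) mod n)} | i. i < n}"
      unfolding is_cycle_graph_def by blast
    interpret C: cycg V E f n using b Ed n3 by unfold_locales
    have P: "Pr V E 3" using pairres_Pr3[OF C.pairres_cyc[OF o]] .
    have inV: "f 0 \<in> V" "f 1 \<in> V" "f 2 \<in> V" using b n3 unfolding bij_betw_def by auto
    have inj: "inj_on f {0..<n}" using b bij_betw_def by blast
    have d: "f 0 \<noteq> f 1" "f 1 \<noteq> f 2" "f 0 \<noteq> f 2"
      using inj_onD[OF inj, of 0 1] inj_onD[OF inj, of 1 2] inj_onD[OF inj, of 0 2] n3 by auto
    have a1: "adj E (f 0) (f 1)" using C.adj_step[of 0] n3 by simp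
    have "adj E (f 1) (f 2)" using C.adj_step[of 1] n3 by (simp add: numeral_2_eq_2)
    then have a2: "adj E (f 2) (f 1)" using adj_sym by metis
    show ?thesis using res3_intro[OF assms P inV d a1 a2] .
  next
    assume "\<exists>n. n \<ge> 3 \<and> is_path_graph V E n"
    then obtain n :: nat and f where n3: "n \<ge> 3" and b: "bij_betw f {0..<n} V"
      and Ed: "E = {{f i, f (i + 1)} | i. i + 1 < n}"
      unfolding is_path_graph_def by blast
    interpret Pa: pathg V E f n using b Ed by unfold_locales
    have P: "Pr V E 3" using pairres_Pr3[OF Pa.pairres_path] .
    have inV: "f 0 \<in> V" "f 1 \<in> V" "f 2 \<in> V" using b n3 unfolding bij_betw_def by auto
    have inj: "inj_on f {0..<n}" using b bij_betw_def by blast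
    have d: "f 0 \<noteq> f 1" "f 1 \<noteq> f 2" "f 0 \<noteq> f 2"
      using inj_onD[OF inj, of 0 1] inj_onD[OF inj, of 1 2] inj_onD[OF inj, of 0 2] n3 by auto
    have a1: "adj E (f 0) (f 1)" using Pa.adj_step[of 0] n3 by simp
    have "adj E (f 1) (f 2)" using Pa.adj_step[of 1] n3 by (simp add: numeral_2_eq_2)
    then have a2: "adj E (f 2) (f 1)" using adj_sym by metis
    show ?thesis using res3_intro[OF assms P inV d a1 a2] .
  qed
qed


end
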